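(* Let $\mathbb{0}=\{x\in\omega^\omega : x(n)=0 \text{ for all but finitely many } n\}$. Then every maximal chain of $(\omega^\omega\setminus\mathbb{0},\le^* )$ has size at least $\mathfrak{c}$; consequently $\mathfrak{mc}(\omega^\omega\setminus\mathbb{0},\le^* )=\mathfrak{c}$.
   Context: For $x,y\in\omega^\omega$, $x\le^* y$ means $x(n)\le y(n)$ for all but finitely many $n$. For a poset (or preorder) $(P,\le)$, a chain is a subset whose elements are pairwise comparable, and $\mathfrak{mc}(P)$ is the minimal cardinality of a maximal (with respect to inclusion) chain of $P$. $\mathfrak{c}=2^{\aleph_0}$. *)

theory Defs
  imports Main "HOL-Library.Equipollence"
begin

definition le_star :: "(nat \<Rightarrow> nat) \<Rightarrow> (nat \<Rightarrow> nat) \<Rightarrow> bool" where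
  "le_star x y \<longleftrightarrow> finite {n. \<not> (x n \<le> y n)}"

definition ev_zero :: "(nat \<Rightarrow> nat) set" where
  "ev_zero = {x. finite {n. x n \<noteq> 0}}"

definition is_chain :: "('a \<Rightarrow> 'a \<Rightarrow> bool) \<Rightarrow> 'a set \<Rightarrow> 'a set \<Rightarrow> bool" where
  "is_chain le P C \<longleftrightarrow> C \<subseteq> P \<and> (\<forall>x\<in>C. \<forall>y\<in>C. le x y \<or> le y x)"

definition is_max_chain :: "('a \<Rightarrow> 'a \<Rightarrow> bool) \<Rightarrow> 'a set \<Rightarrow> 'a set \<Rightarrow> bool" where
  "is_max_chain le P C \<longleftrightarrow> is_chain le P C \<and> (\<forall>D. is_chain le P D \<and> C \<subseteq> D \<longrightarrow> D = C)"

end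

theory Submission
  imports Defs "HOL-Library.Infinite_Set" "HOL-Library.Nat_Bijection"
begin

abbreviation lts :: "(nat \<Rightarrow> nat) \<Rightarrow> (nat \<Rightarrow> nat) \<Rightarrow> bool" where
  "lts x y \<equiv> le_star x y \<and> \<not> le_star y x"

lemma le_star_refl: "le_star x x"
  by (simp add: le_star_def)

lemma le_star_trans: "le_star x y \<Longrightarrow> le_star y z \<Longrightarrow> le_star x z"
  unfolding le_star_def
  by (rule finite_subset[of _ "{n. \<not> x n \<le> y n} \<union> {n. \<not> y n \<le> z n}"]) auto

lemma le_star_pw: "(\<And>n. x n \<le> y n) \<Longrightarrow> le_star x y"
  by (simp add: le_star_def)

lemma le_star_nz: "le_star x y \<Longrightarrow> x \<notin> ev_zero \<Longrightarrow> y \<notin> ev_zero"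
proof
  assume a: "le_star x y" "x \<notin> ev_zero" "y \<in> ev_zero"
  have "{n. x n \<noteq> 0} \<subseteq> {n. \<not> x n \<le> y n} \<union> {n. y n \<noteq> 0}" by auto
  moreover have "finite ({n. \<not> x n \<le> y n} \<union> {n. y n \<noteq> 0})"
    using a unfolding le_star_def ev_zero_def by simp
  ultimately have "finite {n. x n \<noteq> 0}" by (rule finite_subset)
  with a show False unfolding ev_zero_def by simp
qed

lemma interp:
  fixes a b :: "nat \<Rightarrow> nat \<Rightarrow> nat"
  assumes ab: "\<And>i j. le_star (a i) (b j)"
  shows "\<exists>w. \<forall>i j. le_star (a i) w \<and> le_star w (b j)"
proof -
  define F where "F n = (\<Union>i\<le>n. \<Union>j\<le>n. {k. \<not> a i k \<le> b j k})" for n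
  have finF: "finite (F n)" for n
    unfolding F_def using ab by (auto simp: le_star_def)
  define w where "w k = Max ((\<lambda>i. a i k) ` {i. i \<le> k \<and> k \<notin> F i} \<union> {0})" for k
  have fin: "finite ((\<lambda>i. a i k) ` {i. i \<le> k \<and> k \<notin> F i} \<union> {0})" for k by auto
  have "le_star (a n) w" for n
  proof -
    have "{k. \<not> a n k \<le> w k} \<subseteq> {..<n} \<union> F n"
    proof
      fix k assume k: "k \<in> {k. \<not> a n k \<le> w k}"
      show "k \<in> {..<n} \<union> F n"
      proof (rule ccontr)
        assume "k \<notin> {..<n} \<union> F n"
        hence "a n k \<in> (\<lambda>i. a i k) ` {i. i \<le> k \<and> k \<notin> F i} \<union> {0}" by auto
        hence "a n k \<le> w k" unfolding w_def using fin by (rule Max_ge[rotated])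
        with k show False by simp
      qed
    qed
    thus ?thesis unfolding le_star_def using finF by (meson finite_Un finite_lessThan finite_subset)
  qed
  moreover have "le_star w (b m)" for m
  proof -
    have "{k. \<not> w k \<le> b m k} \<subseteq> F m"
    proof
      fix k assume k: "k \<in> {k. \<not> w k \<le> b m k}"
      show "k \<in> F m"
      proof (rule ccontr)
        assume nk: "k \<notin> F m"
        have "\<forall>x \<in> (\<lambda>i. a i k) ` {i. i \<le> k \<and> k \<notin> F i} \<union> {0}. x \<le> b m k"
        proof
          fix x assume "x \<in> (\<lambda>i. a i k) ` {i. i \<le> k \<and> k \<notin> F i} \<union> {0}"
          then consider "x = 0" | i where "x = a i k" "k \<notin> F i" by auto
          then show "x \<le> b m k"
          proof cases
            case 1 then show ?thesis by simp
          next
            case 2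
            show ?thesis
            proof (cases "m \<le> i")
              case True
              with 2 show ?thesis unfolding F_def by auto
            next
              case False
              with 2 nk show ?thesis unfolding F_def by auto
            qed
          qed
        qed
        hence "w k \<le> b m k" unfolding w_def using fin by (subst Max_le_iff) auto
        with k show False by simp
      qed
    qed
    thus ?thesis unfolding le_star_def using finF by (meson finite_subset)
  qed
  ultimately show ?thesis by blast
qed


abbreviation PP :: "(nat \<Rightarrow> nat) set" where "PP \<equiv> UNIV - ev_zero"

lemma inf_even: "infinite {n::nat. even n}"
  unfolding infinite_nat_iff_unbounded_le by (metis dvd_triv_left le_add2 mem_Collect_eq mult_2)

lemma inf_odd: "infinite {n::nat. odd n}"
  unfolding infinite_nat_iff_unbounded_le
  by (metis dvd_triv_left even_plus_one_iff le_add2 le_Suc_eq mem_Collect_eq mult_2 Suc_eq_plus1)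

lemma mc_insert:
  assumes mc: "is_max_chain le_star PP C" and w: "w \<notin> ev_zero"
    and cmp: "\<forall>u\<in>C. le_star u w \<or> le_star w u"
  shows "w \<in> C"
proof -
  have "is_chain le_star PP (insert w C)"
    using mc w cmp unfolding is_max_chain_def is_chain_def by (auto intro: le_star_refl)
  hence "insert w C = C" using mc unfolding is_max_chain_def by blast
  thus ?thesis by blast
qed

lemma mc_cmp: "is_max_chain le_star PP C \<Longrightarrow> x \<in> C \<Longrightarrow> y \<in> C \<Longrightarrow> le_star x y \<or> le_star y x"
  unfolding is_max_chain_def is_chain_def by blast

lemma mc_sub: "is_max_chain le_star PP C \<Longrightarrow> x \<in> C \<Longrightarrow> x \<notin> ev_zero"
  unfolding is_max_chain_def is_chain_def by blast

lemma mc_dense: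
  assumes mc: "is_max_chain le_star PP C" and aC: "a \<in> C" and bC: "b \<in> C" and ab: "lts a b"
  shows "\<exists>c\<in>C. lts a c \<and> lts c b"
proof -
  define A where "A = {n. \<not> b n \<le> a n}"
  have "infinite A" using ab unfolding A_def le_star_def by simp
  then obtain r :: "nat \<Rightarrow> nat" where r: "strict_mono r" "\<And>n. r n \<in> A"
    using infinite_enumerate by blast
  have injr: "inj r" using r(1) strict_mono_imp_inj_on by blast
  define E where "E = r ` {n. even n}"
  define Od where "Od = r ` {n. odd n}"
  have infE: "infinite E" unfolding E_def
    using injr inf_even finite_imageD inj_on_subset by (metis subset_UNIV)
  have infO: "infinite Od" unfolding Od_def
    using injr inf_odd finite_imageD inj_on_subset by (metis subset_UNIV)
  have EA: "E \<subseteq> A" "Od \<subseteq> A" using r(2) unfolding E_def Od_def by auto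
  have EO: "E \<inter> Od = {}" unfolding E_def Od_def using injr by (auto dest: injD)
  define w where "w n = (if n \<in> E then b n else a n)" for n
  have aw: "le_star a w"
    by (rule le_star_pw) (use EA in \<open>auto simp: w_def A_def\<close>)
  have wa: "\<not> le_star w a"
  proof
    assume "le_star w a"
    moreover have "E \<subseteq> {n. \<not> w n \<le> a n}" using EA by (auto simp: w_def A_def)
    ultimately show False using infE unfolding le_star_def by (meson finite_subset)
  qed
  have wb: "le_star w b"
  proof -
    have "{n. \<not> w n \<le> b n} \<subseteq> {n. \<not> a n \<le> b n}" by (auto simp: w_def)
    thus ?thesis using ab unfolding le_star_def by (meson finite_subset)
  qed
  have bw: "\<not> le_star b w"
  proof
    assume "le_star b w"
    moreover have "Od \<subseteq> {n. \<not> b n \<le> w n}" using EA EO by (auto simp: w_def A_def)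
    ultimately show False using infO unfolding le_star_def by (meson finite_subset)
  qed
  show ?thesis
  proof (cases "\<forall>u\<in>C. le_star u w \<or> le_star w u")
    case True
    have "w \<notin> ev_zero" using le_star_nz[OF aw mc_sub[OF mc aC]] .
    hence "w \<in> C" using mc_insert[OF mc] True by blast
    thus ?thesis using aw wa wb bw by blast
  next
    case False
    then obtain u where u: "u \<in> C" "\<not> le_star u w" "\<not> le_star w u" by blast
    have "\<not> le_star u a" using u aw le_star_trans by blast
    hence au: "le_star a u" using mc_cmp[OF mc aC u(1)] by blast
    have "\<not> le_star b u" using u wb le_star_trans by blast
    hence ub: "le_star u b" using mc_cmp[OF mc bC u(1)] by blast
    show ?thesis using u au ub \<open>\<not> le_star u a\<close> \<open>\<not> le_star b u\<close> by blast
  qed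
qed

lemma mc_cut:
  fixes a b :: "nat \<Rightarrow> nat \<Rightarrow> nat"
  assumes mc: "is_max_chain le_star PP C" and aC: "\<And>i. a i \<in> C" and bC: "\<And>j. b j \<in> C"
    and ab: "\<And>i j. le_star (a i) (b j)"
  shows "\<exists>e\<in>C. \<forall>i j. le_star (a i) e \<and> le_star e (b j)"
proof (cases "\<exists>u\<in>C. \<forall>i j. le_star (a i) u \<and> le_star u (b j)")
  case True thus ?thesis by blast
next
  case False
  obtain w where w: "\<forall>i j. le_star (a i) w \<and> le_star w (b j)" using interp[of a b] ab by blast
  have "\<forall>u\<in>C. le_star u w \<or> le_star w u"
  proof
    fix u assume uC: "u \<in> C"
    then obtain i j where "\<not> le_star (a i) u \<or> \<not> le_star u (b j)" using False by blast
    then show "le_star u w \<or> le_star w u"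
    proof (elim disjE)
      assume "\<not> le_star (a i) u"
      hence "le_star u (a i)" using mc_cmp[OF mc aC uC] by blast
      thus ?thesis using w le_star_trans by blast
    next
      assume "\<not> le_star u (b j)"
      hence "le_star (b j) u" using mc_cmp[OF mc bC uC] by blast
      thus ?thesis using w le_star_trans by blast
    qed
  qed
  moreover have "w \<notin> ev_zero" using le_star_nz w mc_sub[OF mc aC] by blast
  ultimately have "w \<in> C" using mc_insert[OF mc] by blast
  thus ?thesis using w by blast
qed

lemma mc_two:
  assumes mc: "is_max_chain le_star PP C"
  shows "\<exists>a\<in>C. \<exists>b\<in>C. lts a b"
proof -
  have "C \<noteq> {}"
  proof
    assume "C = {}"
    have "(\<lambda>n. 1::nat) \<notin> ev_zero" by (simp add: ev_zero_def)
    hence "(\<lambda>n. 1::nat) \<in> C" using mc_insert[OF mc] \<open>C = {}\<close> by blast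
    with \<open>C = {}\<close> show False by simp
  qed
  then obtain x where xC: "x \<in> C" by blast
  define y where "y n = x n + 1" for n
  have xy: "le_star x y" by (rule le_star_pw) (simp add: y_def)
  have yx: "\<not> le_star y x" by (simp add: le_star_def y_def)
  show ?thesis
  proof (cases "\<forall>u\<in>C. le_star u y \<or> le_star y u")
    case True
    have "y \<notin> ev_zero" using le_star_nz[OF xy mc_sub[OF mc xC]] .
    hence "y \<in> C" using mc_insert[OF mc] True by blast
    thus ?thesis using xC xy yx by blast
  next
    case False
    then obtain u where u: "u \<in> C" "\<not> le_star u y" "\<not> le_star y u" by blast
    have "\<not> le_star u x" using u xy le_star_trans by blast
    hence "le_star x u" using mc_cmp[OF mc xC u(1)] by blast
    thus ?thesis using u xC \<open>\<not> le_star u x\<close> by blast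
  qed
qed


definition mid :: "(nat \<Rightarrow> nat) set \<Rightarrow> (nat \<Rightarrow> nat) \<Rightarrow> (nat \<Rightarrow> nat) \<Rightarrow> (nat \<Rightarrow> nat)" where
  "mid C l h = (SOME c. c \<in> C \<and> lts l c \<and> lts c h)"

lemma mid_prop:
  assumes "is_max_chain le_star PP C" "l \<in> C" "h \<in> C" "lts l h"
  shows "mid C l h \<in> C \<and> lts l (mid C l h) \<and> lts (mid C l h) h"
  unfolding mid_def using someI_ex[OF mc_dense[OF assms, unfolded Bex_def]] .

primrec iv :: "(nat \<Rightarrow> nat) set \<Rightarrow> (nat \<Rightarrow> nat) \<Rightarrow> (nat \<Rightarrow> nat) \<Rightarrow> nat set \<Rightarrow> nat
   \<Rightarrow> (nat \<Rightarrow> nat) \<times> (nat \<Rightarrow> nat)" where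
  "iv C a b X 0 = (a, b)"
| "iv C a b X (Suc n) = (if n \<in> X
     then (mid C (mid C (fst (iv C a b X n)) (snd (iv C a b X n))) (snd (iv C a b X n)), snd (iv C a b X n))
     else (fst (iv C a b X n), mid C (fst (iv C a b X n)) (snd (iv C a b X n))))"

lemma iv_inv:
  assumes mc: "is_max_chain le_star PP C" and "a \<in> C" "b \<in> C" "lts a b"
  shows "fst (iv C a b X n) \<in> C \<and> snd (iv C a b X n) \<in> C \<and> lts (fst (iv C a b X n)) (snd (iv C a b X n))"
proof (induction n)
  case 0 then show ?case using assms by simp
next
  case (Suc n)
  let ?l = "fst (iv C a b X n)" and ?h = "snd (iv C a b X n)"
  have m1: "mid C ?l ?h \<in> C \<and> lts ?l (mid C ?l ?h) \<and> lts (mid C ?l ?h) ?h"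
    using mid_prop[OF mc] Suc by blast
  have m2: "mid C (mid C ?l ?h) ?h \<in> C \<and> lts (mid C ?l ?h) (mid C (mid C ?l ?h) ?h) \<and> lts (mid C (mid C ?l ?h) ?h) ?h"
    using mid_prop[OF mc, of "mid C ?l ?h" ?h] m1 Suc by blast
  show ?case
  proof (cases "n \<in> X")
    case True
    thus ?thesis using m1 m2 Suc by simp
  next
    case False
    thus ?thesis using m1 Suc by simp
  qed
qed

lemma iv_step:
  assumes mc: "is_max_chain le_star PP C" and "a \<in> C" "b \<in> C" "lts a b"
  shows "le_star (fst (iv C a b X n)) (fst (iv C a b X (Suc n))) \<and> le_star (snd (iv C a b X (Suc n))) (snd (iv C a b X n))"
proof -
  let ?l = "fst (iv C a b X n)" and ?h = "snd (iv C a b X n)"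
  have I: "?l \<in> C" "?h \<in> C" "lts ?l ?h" using iv_inv[OF assms] by blast+
  have m1: "mid C ?l ?h \<in> C \<and> lts ?l (mid C ?l ?h) \<and> lts (mid C ?l ?h) ?h"
    using mid_prop[OF mc I] .
  have m2: "lts (mid C ?l ?h) (mid C (mid C ?l ?h) ?h)"
    using mid_prop[OF mc, of "mid C ?l ?h" ?h] m1 I by blast
  show ?thesis
  proof (cases "n \<in> X")
    case True
    have "le_star ?l (mid C (mid C ?l ?h) ?h)" using m1 m2 le_star_trans by blast
    thus ?thesis using True m1 by (simp add: le_star_refl)
  next
    case False
    thus ?thesis using m1 by (simp add: le_star_refl)
  qed
qed

lemma iv_mono:
  assumes mc: "is_max_chain le_star PP C" and "a \<in> C" "b \<in> C" "lts a b" and "i \<le> j"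
  shows "le_star (fst (iv C a b X i)) (fst (iv C a b X j)) \<and> le_star (snd (iv C a b X j)) (snd (iv C a b X i))"
  using assms(5)
proof (induction j rule: dec_induct)
  case base then show ?case by (simp add: le_star_refl)
next
  case (step j)
  then show ?case using iv_step[OF assms(1-4), of X j] le_star_trans by blast
qed

lemma iv_le:
  assumes mc: "is_max_chain le_star PP C" and "a \<in> C" "b \<in> C" "lts a b"
  shows "le_star (fst (iv C a b X i)) (snd (iv C a b X j))"
proof (cases "i \<le> j")
  case True
  thus ?thesis using iv_mono[OF assms True, of X] iv_inv[OF assms, of X j] le_star_trans by blast
next
  case False
  hence ji: "j \<le> i" by simp
  show ?thesis using iv_mono[OF assms ji, of X] iv_inv[OF assms, of X i] le_star_trans by blast
qed

lemma iv_prefix: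
  "(\<forall>m<k. m \<in> X \<longleftrightarrow> m \<in> Y) \<Longrightarrow> iv C a b X k = iv C a b Y k"
  by (induction k) auto

lemma part1:
  assumes mc: "is_max_chain le_star PP C"
  shows "(UNIV :: nat set set) \<lesssim> C"
proof -
  obtain a b where ab: "a \<in> C" "b \<in> C" "lts a b" using mc_two[OF mc] by blast
  have "\<exists>e\<in>C. \<forall>i j. le_star (fst (iv C a b X i)) e \<and> le_star e (snd (iv C a b X j))" for X
    by (rule mc_cut[OF mc]) (use iv_inv[OF mc ab] iv_le[OF mc ab] in blast)+
  then have "\<forall>X. \<exists>e. e \<in> C \<and> (\<forall>i j. le_star (fst (iv C a b X i)) e \<and> le_star e (snd (iv C a b X j)))"
    by blast
  then obtain e where e0: "\<forall>X. e X \<in> C \<and> (\<forall>i j. le_star (fst (iv C a b X i)) (e X) \<and> le_star (e X) (snd (iv C a b X j)))"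
    by (rule choice[THEN exE])
  have e: "\<And>X. e X \<in> C"
    "\<And>X i j. le_star (fst (iv C a b X i)) (e X) \<and> le_star (e X) (snd (iv C a b X j))"
    using e0 by blast+
  have key: "e X \<noteq> e Y" if "n \<notin> X" "n \<in> Y" "\<forall>m<n. m \<in> X \<longleftrightarrow> m \<in> Y" for X Y n
  proof
    assume eq: "e X = e Y"
    have pre: "iv C a b X n = iv C a b Y n" using iv_prefix that(3) by blast
    let ?l = "fst (iv C a b X n)" and ?h = "snd (iv C a b X n)"
    have I: "?l \<in> C" "?h \<in> C" "lts ?l ?h" using iv_inv[OF mc ab] by blast+
    have m1: "mid C ?l ?h \<in> C \<and> lts ?l (mid C ?l ?h) \<and> lts (mid C ?l ?h) ?h"
      using mid_prop[OF mc I] .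
    have m2: "lts (mid C ?l ?h) (mid C (mid C ?l ?h) ?h)"
      using mid_prop[OF mc, of "mid C ?l ?h" ?h] m1 I by blast
    have "snd (iv C a b X (Suc n)) = mid C ?l ?h" using that(1) by simp
    hence x: "le_star (e X) (mid C ?l ?h)" using e(2)[of X "Suc n" "Suc n"] by simp
    have "fst (iv C a b Y (Suc n)) = mid C (mid C ?l ?h) ?h" using that(2) pre by simp
    hence y: "le_star (mid C (mid C ?l ?h) ?h) (e Y)" using e(2)[of Y "Suc n" "Suc n"] by simp
    have "le_star (mid C (mid C ?l ?h) ?h) (mid C ?l ?h)"
      using le_star_trans[OF y[unfolded eq[symmetric]] x] .
    with m2 show False by blast
  qed
  have "inj e"
  proof (rule injI, rule ccontr)
    fix X Y assume eq: "e X = e Y" and ne: "X \<noteq> Y"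
    then obtain n0 where "n0 \<in> X \<longleftrightarrow> n0 \<notin> Y" by blast
    define n where "n = (LEAST n. n \<in> X \<longleftrightarrow> n \<notin> Y)"
    have n: "n \<in> X \<longleftrightarrow> n \<notin> Y" unfolding n_def by (rule LeastI) fact
    have lt: "\<forall>m<n. m \<in> X \<longleftrightarrow> m \<in> Y"
    proof (intro allI impI)
      fix m assume "m < n"
      hence "\<not> (m \<in> X \<longleftrightarrow> m \<notin> Y)" unfolding n_def by (rule not_less_Least)
      thus "m \<in> X \<longleftrightarrow> m \<in> Y" by blast
    qed
    show False
    proof (cases "n \<in> Y")
      case True
      hence "n \<notin> X" using n by blast
      thus False using key[of n X Y] True lt eq by blast
    next
      case False
      hence "n \<in> X" using n by blast
      moreover have "\<forall>m<n. m \<in> Y \<longleftrightarrow> m \<in> X" using lt by blast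
      ultimately show False using key[of n Y X] False eq by simp
    qed
  qed
  moreover have "e ` UNIV \<subseteq> C" using e(1) by blast
  ultimately show ?thesis unfolding lepoll_def by blast
qed

lemma fun_lepoll: "(UNIV :: (nat \<Rightarrow> nat) set) \<lesssim> (UNIV :: nat set set)"
proof -
  define g where "g f = range (\<lambda>n. prod_encode (n, f n))" for f :: "nat \<Rightarrow> nat"
  have "inj g"
  proof (rule injI)
    fix f h assume eq: "g f = g h"
    show "f = h"
    proof
      fix n
      have "prod_encode (n, f n) \<in> g h" using eq unfolding g_def by blast
      then show "f n = h n" unfolding g_def by auto
    qed
  qed
  thus ?thesis unfolding lepoll_def by blast
qed

theorem mainTheorem2:
  shows "(\<forall>C. is_max_chain le_star (UNIV - ev_zero) C \<longrightarrow> (UNIV :: nat set set) \<lesssim> C)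
       \<and> (\<exists>C. is_max_chain le_star (UNIV - ev_zero) C \<and> C \<approx> (UNIV :: nat set set))"
proof -
  define A where "A = {D. is_chain le_star PP D}"
  have "\<forall>K\<in>chains A. \<Union>K \<in> A"
  proof
    fix K assume K: "K \<in> chains A"
    show "\<Union>K \<in> A" unfolding A_def is_chain_def
    proof (intro CollectI conjI ballI)
      show "\<Union>K \<subseteq> PP" using K unfolding chains_def A_def is_chain_def by blast
    next
      fix x y assume "x \<in> \<Union>K" "y \<in> \<Union>K"
      then obtain D1 D2 where "D1 \<in> K" "D2 \<in> K" "x \<in> D1" "y \<in> D2" by blast
      moreover have "D1 \<subseteq> D2 \<or> D2 \<subseteq> D1" using K \<open>D1 \<in> K\<close> \<open>D2 \<in> K\<close>
        unfolding chains_def chain_subset_def by blast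
      moreover have "D1 \<in> A" "D2 \<in> A" using K \<open>D1 \<in> K\<close> \<open>D2 \<in> K\<close> unfolding chains_def by blast+
      ultimately show "le_star x y \<or> le_star y x" unfolding A_def is_chain_def by blast
    qed
  qed
  then obtain M where M: "M \<in> A" "\<forall>X\<in>A. M \<subseteq> X \<longrightarrow> X = M" using Zorn_Lemma by blast
  have mcM: "is_max_chain le_star PP M" using M unfolding is_max_chain_def A_def by blast
  have "M \<lesssim> (UNIV :: (nat \<Rightarrow> nat) set)" by (rule subset_imp_lepoll) simp
  hence "M \<lesssim> (UNIV :: nat set set)" using fun_lepoll lepoll_trans by blast
  hence "M \<approx> (UNIV :: nat set set)" using part1[OF mcM] lepoll_antisym by blast
  thus ?thesis using part1 mcM by blast
qed

end
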